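(* Let $\mathcal{L}:TQ\to\mathbb{R}$, $Q=\mathbb{R}^n$, be a smooth Lagrangian, let $s\ge1$ and fix $0=d_0<d_1<\dots<d_s=1$. Let $q:[0,h_0]\to Q$ be smooth and, for small $h>0$, let $q_{EL}:[0,h]\to Q$ be a smooth solution of the Euler–Lagrange equation $\frac{\partial\mathcal L}{\partial q}(q,\dot q)-\frac{d}{dt}\frac{\partial\mathcal L}{\partial\dot q}(q,\dot q)=0$ with $q_{EL}(0)=q(0)$, $q_{EL}(h)=q(h)$ (depending smoothly/uniformly on $h$ so that its derivatives are bounded uniformly in $h$). Let $\hat q$ be the polynomial of degree at most $s$ interpolating $q_{EL}$ at the points $hd_0,\dots,hd_s$. Then \[ \int_0^h\mathcal L(q_{EL},\dot q_{EL})\,dt-\int_0^h\mathcal L(\hat q,\dot{\hat q})\,dt=\mathcal O(h^{2s+1})\quad\text{as }h\to0. \]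
   Context: The Euler–Lagrange equation is the stationarity condition of the action $\int_0^h\mathcal L(q,\dot q)\,dt$ under variations vanishing at the endpoints. *)

theory Defs
  imports "HOL-Analysis.Analysis" "HOL-Library.Landau_Symbols"
begin

text \<open>C-infinity maps between normed spaces: all iterated Frechet derivatives exist.
  D vs x is the iterated derivative applied to the directions in vs (most recent first).\<close>
definition smooth_map :: "('a::real_normed_vector \<Rightarrow> 'b::real_normed_vector) \<Rightarrow> bool" where
  "smooth_map f \<longleftrightarrow> (\<exists>D :: 'a list \<Rightarrow> 'a \<Rightarrow> 'b. D [] = f \<and>
      (\<forall>vs x. (D vs has_derivative (\<lambda>v. D (v # vs) x)) (at x)))"

definition curve_derivs :: "real set \<Rightarrow> (real \<Rightarrow> 'a::real_normed_vector) \<Rightarrow> (nat \<Rightarrow> real \<Rightarrow> 'a) \<Rightarrow> bool" where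
  "curve_derivs S f Dk \<longleftrightarrow> (\<forall>t\<in>S. Dk 0 t = f t) \<and>
      (\<forall>k. \<forall>t\<in>S. (Dk k has_vector_derivative Dk (Suc k) t) (at t within S))"

definition smooth_curve_on :: "real set \<Rightarrow> (real \<Rightarrow> 'a::real_normed_vector) \<Rightarrow> bool" where
  "smooth_curve_on S f \<longleftrightarrow> (\<exists>Dk. curve_derivs S f Dk)"

definition dLdq :: "('a::real_normed_vector \<times> 'a \<Rightarrow> real) \<Rightarrow> 'a \<Rightarrow> 'a \<Rightarrow> 'a \<Rightarrow> real" where
  "dLdq L x v w = frechet_derivative L (at (x, v)) (w, 0)"

definition dLdv :: "('a::real_normed_vector \<times> 'a \<Rightarrow> real) \<Rightarrow> 'a \<Rightarrow> 'a \<Rightarrow> 'a \<Rightarrow> real" where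
  "dLdv L x v w = frechet_derivative L (at (x, v)) (0, w)"

definition action :: "('a::euclidean_space \<times> 'a \<Rightarrow> real) \<Rightarrow> real \<Rightarrow> (real \<Rightarrow> 'a) \<Rightarrow> real" where
  "action L h c = integral {0..h} (\<lambda>t. L (c t, vector_derivative c (at t within {0..h})))"

end

theory Submission
  imports Defs
begin

lemma poly_tower:
  fixes c :: "nat \<Rightarrow> 'a::real_normed_vector"
  shows "\<exists>P. P 0 = (\<lambda>t. \<Sum>j\<le>n. t ^ j *\<^sub>R c j) \<and> (\<forall>k t. (P k has_vector_derivative P (Suc k) t) (at t))
     \<and> (\<forall>k>n. \<forall>t. P k t = 0)"
proof (induction n arbitrary: c)
  case 0
  define P :: "nat \<Rightarrow> real \<Rightarrow> 'a" where "P k = (if k = 0 then (\<lambda>t::real. c 0) else (\<lambda>t. 0))" for k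
  show ?case
    by (rule exI[of _ P]) (auto simp: P_def intro!: derivative_eq_intros)
next
  case (Suc n)
  obtain P where P: "P 0 = (\<lambda>t. \<Sum>j\<le>n. t ^ j *\<^sub>R (real (Suc j) *\<^sub>R c (Suc j)))"
    "\<forall>k t. (P k has_vector_derivative P (Suc k) t) (at t)" "\<forall>k>n. \<forall>t. P k t = 0"
    using Suc[of "\<lambda>j. real (Suc j) *\<^sub>R c (Suc j)"] by blast
  define Q where "Q k = (if k = 0 then (\<lambda>t. \<Sum>j\<le>Suc n. t ^ j *\<^sub>R c j) else P (k - 1))" for k
  have d0: "((\<lambda>t. \<Sum>j\<le>Suc n. t ^ j *\<^sub>R c j) has_vector_derivative P 0 t) (at t)" for t
  proof -
    have e: "(\<lambda>t. \<Sum>j\<le>Suc n. t ^ j *\<^sub>R c j) = (\<lambda>t. c 0 + (\<Sum>j\<le>n. t ^ Suc j *\<^sub>R c (Suc j)))"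
      by (simp only: sum.atMost_Suc_shift) simp
    show ?thesis unfolding e P(1)
      apply (simp add: has_vector_derivative_def)
      apply (rule derivative_eq_intros refl)+
      apply (rule ext)
      apply (simp add: scaleR_sum_right)
      apply (rule sum.cong, simp)
      subgoal for x j by (cases j) (auto simp: algebra_simps)
      done
  qed
  show ?case
  proof (rule exI[of _ Q], intro conjI allI impI)
    fix k t show "(Q k has_vector_derivative Q (Suc k) t) (at t)"
      using P(2) d0 by (cases k) (auto simp: Q_def)
  next
    fix k :: nat and t assume "k > Suc n" then show "Q k t = 0"
      using P(3) by (auto simp: Q_def)
  qed (simp add: Q_def)
qed
lemma smooth_taylor2:
  fixes L :: "'b::euclidean_space \<Rightarrow> real"
  assumes "smooth_map L"
  shows "\<exists>C\<ge>0. \<forall>p \<Delta>. norm p \<le> R \<longrightarrow> norm (p + \<Delta>) \<le> R \<longrightarrow>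
     \<bar>L (p + \<Delta>) - L p - frechet_derivative L (at p) \<Delta>\<bar> \<le> C * (norm \<Delta>)\<^sup>2"
proof -
  obtain D :: "'b list \<Rightarrow> 'b \<Rightarrow> real" where D0: "D [] = L"
    and Dd: "\<And>vs x. (D vs has_derivative (\<lambda>v. D (v # vs) x)) (at x)"
    using assms unfolding smooth_map_def by blast
  define S :: "'b set" where "S = cball 0 R"
  have cS: "compact S" "convex S" by (auto simp: S_def)
  have lin: "D (w # vs) x = (\<Sum>b\<in>Basis. (w \<bullet> b) * D (b # vs) x)" for w vs x
  proof -
    have "linear (\<lambda>v. D (v # vs) x)"
      using Dd[of vs x] has_derivative_bounded_linear bounded_linear.linear by blast
    from Linear_Algebra.linear_componentwise[OF this, of w 1] show ?thesis by simp
  qed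
  have contD: "continuous_on S (D vs)" for vs
    using Dd has_derivative_continuous continuous_at_imp_continuous_on by blast
  define \<phi> where "\<phi> x = (\<Sum>b\<in>Basis. \<Sum>b'\<in>Basis. \<bar>D [b', b] x\<bar>)" for x
  have "continuous_on S \<phi>"
    unfolding \<phi>_def by (intro continuous_intros contD)
  then have "bounded (\<phi> ` S)"
    using cS compact_continuous_image compact_imp_bounded by blast
  then obtain M where M: "\<And>x. x \<in> S \<Longrightarrow> norm (\<phi> x) \<le> M" and M0: "M > 0"
    unfolding bounded_pos by blast
  have M1: "\<bar>D [b', b] x\<bar> \<le> M" if "x \<in> S" "b \<in> Basis" "b' \<in> Basis" for x b b'
  proof -
    have "\<bar>D [b', b] x\<bar> \<le> (\<Sum>b'\<in>Basis. \<bar>D [b', b] x\<bar>)"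
      by (rule member_le_sum) (use that in auto)
    also have "\<dots> \<le> \<phi> x" unfolding \<phi>_def
      by (rule member_le_sum[where f="\<lambda>b. \<Sum>b'\<in>Basis. \<bar>D [b', b] x\<bar>"]) (use that in \<open>auto intro: sum_nonneg\<close>)
    also have "\<dots> \<le> M" using M[OF that(1)] by simp
    finally show ?thesis .
  qed
  define K where "K = real DIM('b) * M"
  have K2: "\<bar>D [w, b] x\<bar> \<le> K * norm w" if "x \<in> S" "b \<in> Basis" for x b w
  proof -
    have "\<bar>D [w, b] x\<bar> = \<bar>\<Sum>b'\<in>Basis. (w \<bullet> b') * D [b', b] x\<bar>" using lin[of w "[b]" x] by simp
    also have "\<dots> \<le> (\<Sum>b'\<in>Basis. \<bar>w \<bullet> b'\<bar> * \<bar>D [b', b] x\<bar>)"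
      by (rule order_trans[OF sum_abs]) (simp add: abs_mult)
    also have "\<dots> \<le> (\<Sum>b'\<in>(Basis::'b set). norm w * M)"
      using that by (intro sum_mono mult_mono) (auto intro!: Basis_le_norm M1)
    also have "\<dots> = K * norm w" by (simp add: K_def)
    finally show ?thesis .
  qed
  have Lip1: "\<bar>D [b] x - D [b] y\<bar> \<le> K * norm (x - y)" if "x \<in> S" "y \<in> S" "b \<in> Basis" for x y b
  proof -
    have "norm (D [b] x - D [b] y) \<le> K * norm (x - y)"
    proof (rule differentiable_bound[OF cS(2) _ _ that(1,2)])
      fix z assume "z \<in> S"
      show "(D [b] has_derivative (\<lambda>w. D [w, b] z)) (at z within S)"
        using Dd[of "[b]" z] has_derivative_at_withinI by blast
      show "onorm (\<lambda>w. D [w, b] z) \<le> K"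
        by (rule onorm_le) (use K2[OF \<open>z \<in> S\<close> that(3)] in simp)
    qed
    then show ?thesis by simp
  qed
  define K' where "K' = real DIM('b) * K"
  have K'0: "K' \<ge> 0"
    using M0 by (simp add: K'_def K_def)
  have Lip: "\<bar>D [w] x - D [w] y\<bar> \<le> K' * norm (x - y) * norm w" if "x \<in> S" "y \<in> S" for x y w
  proof -
    have "\<bar>D [w] x - D [w] y\<bar> = \<bar>\<Sum>b\<in>Basis. (w \<bullet> b) * (D [b] x - D [b] y)\<bar>"
      using lin[of w "[]" x] lin[of w "[]" y] by (simp add: sum_subtractf right_diff_distrib)
    also have "\<dots> \<le> (\<Sum>b\<in>Basis. \<bar>w \<bullet> b\<bar> * \<bar>D [b] x - D [b] y\<bar>)"
      by (rule order_trans[OF sum_abs]) (simp add: abs_mult)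
    also have "\<dots> \<le> (\<Sum>b\<in>(Basis::'b set). norm w * (K * norm (x - y)))"
      using that by (intro sum_mono mult_mono) (auto intro!: Basis_le_norm Lip1)
    also have "\<dots> = K' * norm (x - y) * norm w" by (simp add: K'_def)
    finally show ?thesis .
  qed
  show ?thesis
  proof (intro exI[of _ K'] conjI allI impI K'0)
    fix p \<Delta> :: 'b assume p: "norm p \<le> R" "norm (p + \<Delta>) \<le> R"
    have pS: "p \<in> S" "p + \<Delta> \<in> S" using p by (auto simp: S_def)
    have seg: "closed_segment p (p + \<Delta>) \<subseteq> S" by (rule closed_segment_subset[OF pS cS(2)])
    have fd: "frechet_derivative L (at p) = (\<lambda>w. D [w] p)"
      using frechet_derivative_at[OF Dd[of "[]" p]] D0 by simp
    have "norm (L (p + \<Delta>) - L p - (\<lambda>w. D [w] p) (p + \<Delta> - p)) \<le> norm (p + \<Delta> - p) * (K' * norm \<Delta>)"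
    proof (rule differentiable_bound_linearization[where S="closed_segment p (p + \<Delta>)"])
      fix t :: real assume "t \<in> {0..1}"
      then show "p + t *\<^sub>R (p + \<Delta> - p) \<in> closed_segment p (p + \<Delta>)"
        by (auto simp: closed_segment_def intro!: exI[of _ t] simp: algebra_simps)
    next
      fix x assume "x \<in> closed_segment p (p + \<Delta>)"
      show "(L has_derivative (\<lambda>w. D [w] x)) (at x within closed_segment p (p + \<Delta>))"
        using Dd[of "[]" x] D0 has_derivative_at_withinI by fastforce
    next
      fix x assume x: "x \<in> closed_segment p (p + \<Delta>)"
      have nx: "norm (x - p) \<le> norm \<Delta>" using segment_bound(1)[OF x] by simp
      show "onorm ((\<lambda>w. D [w] x) - (\<lambda>w. D [w] p)) \<le> K' * norm \<Delta>"
      proof (rule onorm_le)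
        fix w
        have "\<bar>D [w] x - D [w] p\<bar> \<le> K' * norm (x - p) * norm w"
          using Lip[of x p w] seg x pS by auto
        also have "\<dots> \<le> K' * norm \<Delta> * norm w"
          by (intro mult_right_mono mult_left_mono nx K'0) auto
        finally show "norm (((\<lambda>w. D [w] x) - (\<lambda>w. D [w] p)) w) \<le> K' * norm \<Delta> * norm w" by simp
      qed
    qed auto
    then show "\<bar>L (p + \<Delta>) - L p - frechet_derivative L (at p) \<Delta>\<bar> \<le> K' * (norm \<Delta>)\<^sup>2"
      by (simp add: fd power2_eq_square mult_ac)
  qed
qed
lemma rolle_step:
  fixes f f' :: "real \<Rightarrow> real"
  assumes "0 < h" and der: "\<And>t. t \<in> {0..h} \<Longrightarrow> (f has_real_derivative f' t) (at t within {0..h})"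
    and ab: "0 \<le> a" "a < b" "b \<le> h" and fab: "f a = 0" "f b = 0"
  shows "\<exists>z. a < z \<and> z < b \<and> f' z = 0"
proof -
  have "continuous_on {0..h} f"
    using der by (meson DERIV_continuous continuous_on_eq_continuous_within)
  then have c: "continuous_on {a..b} f" by (rule continuous_on_subset) (use ab in auto)
  have d: "(f has_derivative ((*) (f' x))) (at x)" if "a < x" "x < b" for x
  proof -
    have "x \<in> interior {0..h}" using that ab by auto
    then have "at x within {0..h} = at x" by (rule at_within_interior)
    then show ?thesis using der[of x] that ab by (auto simp: has_field_derivative_def)
  qed
  obtain z where z: "a < z" "z < b" "((*) (f' z)) = (\<lambda>v. 0)"
    using Rolle_deriv[OF ab(2) _ c d] fab by auto
  have "f' z = 0" using fun_cong[OF z(3), of 1] by simp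
  with z(1,2) show ?thesis by blast
qed

lemma interp_zeros:
  fixes F :: "nat \<Rightarrow> real \<Rightarrow> real"
  assumes h: "0 < h"
    and der: "\<And>k t. t \<in> {0..h} \<Longrightarrow> (F k has_real_derivative F (Suc k) t) (at t within {0..h})"
    and z: "\<forall>i<s. z i < z (Suc i)" "\<forall>i\<le>s. z i \<in> {0..h}" "\<forall>i\<le>s. F 0 (z i) = 0"
  shows "k \<le> s \<Longrightarrow> \<exists>w. (\<forall>i<s-k. w i < w (Suc i)) \<and> (\<forall>i\<le>s-k. w i \<in> {0..h} \<and> F k (w i) = 0)"
proof (induction k)
  case 0
  then show ?case using z by (intro exI[of _ z]) auto
next
  case (Suc k)
  then obtain w where w: "\<forall>i<s-k. w i < w (Suc i)" "\<forall>i\<le>s-k. w i \<in> {0..h} \<and> F k (w i) = 0"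
    by auto
  have ex: "\<exists>y. w i < y \<and> y < w (Suc i) \<and> F (Suc k) y = 0" if "i < s - k" for i
    using rolle_step[OF h, of "F k" "F (Suc k)" "w i" "w (Suc i)"] der w that by auto
  define w' where "w' i = (SOME y. w i < y \<and> y < w (Suc i) \<and> F (Suc k) y = 0)" for i
  have w': "w i < w' i \<and> w' i < w (Suc i) \<and> F (Suc k) (w' i) = 0" if "i < s - k" for i
    unfolding w'_def using someI_ex[OF ex[OF that]] .
  show ?case
  proof (intro exI[of _ w'] conjI allI impI)
    fix i assume "i < s - Suc k"
    then have "i < s - k" "Suc i < s - k" by arith+
    then show "w' i < w' (Suc i)" using w'[of i] w'[of "Suc i"] by linarith
  next
    fix i assume i: "i \<le> s - Suc k"
    then have "i < s - k" using Suc.prems by auto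
    then show "w' i \<in> {0..h}" using w'[of i] w(2) \<open>i < s - k\<close>
      by (smt (verit, best) Suc_leI atLeastAtMost_iff less_imp_le_nat)
    show "F (Suc k) (w' i) = 0" using w'[OF \<open>i < s - k\<close>] by simp
  qed
qed

lemma interp_bound:
  fixes F :: "nat \<Rightarrow> real \<Rightarrow> real"
  assumes h: "0 < h"
    and der: "\<And>k t. t \<in> {0..h} \<Longrightarrow> (F k has_real_derivative F (Suc k) t) (at t within {0..h})"
    and z: "\<forall>i<s. z i < z (Suc i)" "\<forall>i\<le>s. z i \<in> {0..h}" "\<forall>i\<le>s. F 0 (z i) = 0"
    and M: "\<And>t. t \<in> {0..h} \<Longrightarrow> \<bar>F (Suc s) t\<bar> \<le> M"
  shows "j \<le> Suc s \<Longrightarrow> t \<in> {0..h} \<Longrightarrow> \<bar>F (Suc s - j) t\<bar> \<le> M * h ^ j"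
proof (induction j arbitrary: t)
  case 0
  then show ?case using M by simp
next
  case (Suc j)
  define k where "k = s - j"
  have kS: "Suc s - j = Suc k" "Suc s - Suc j = k" using Suc.prems by (auto simp: k_def)
  have "M \<ge> 0" using M[of 0] h by auto
  obtain w where w: "\<forall>i\<le>s-k. w i \<in> {0..h} \<and> F k (w i) = 0"
    using interp_zeros[OF h der z, of k] by (auto simp: k_def)
  then have w0: "w 0 \<in> {0..h}" "F k (w 0) = 0" by auto
  have "norm (F k t - F k (w 0)) \<le> (M * h ^ j) * norm (t - w 0)"
  proof (rule differentiable_bound[where f'="\<lambda>x. (*) (F (Suc k) x)"])
    show "convex {0..h}" by simp
    fix x :: real assume x: "x \<in> {0..h}"
    show "(F k has_derivative ((*) (F (Suc k) x))) (at x within {0..h})"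
      using der[OF x, of k] by (simp add: has_field_derivative_def)
    show "onorm ((*) (F (Suc k) x)) \<le> M * h ^ j"
      by (rule onorm_le) (use Suc.IH[of x] Suc.prems x kS in \<open>auto simp: abs_mult mult.commute intro: mult_left_mono\<close>)
  qed (use Suc.prems w0 in auto)
  also have "\<dots> \<le> (M * h ^ j) * h"
    using Suc.prems w0 \<open>M \<ge> 0\<close> h by (intro mult_left_mono) auto
  finally show ?case using w0 kS by (simp add: mult_ac)
qed
lemma per_h:
  fixes L :: "'a::euclidean_space \<times> 'a \<Rightarrow> real" and x y :: "real \<Rightarrow> 'a"
    and E P :: "nat \<Rightarrow> real \<Rightarrow> 'a" and d :: "nat \<Rightarrow> real"
  assumes Ld: "\<And>p. L differentiable (at p)"
    and taylor: "\<And>p \<Delta>. norm p \<le> R \<Longrightarrow> norm (p + \<Delta>) \<le> R \<Longrightarrow>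
        \<bar>L (p + \<Delta>) - L p - frechet_derivative L (at p) \<Delta>\<bar> \<le> C * (norm \<Delta>)\<^sup>2"
    and C0: "C \<ge> 0"
    and h: "0 < h" "h \<le> 1"
    and Ecd: "curve_derivs {0..h} x E"
    and Pd: "\<And>k t. (P k has_vector_derivative P (Suc k) t) (at t)" "P 0 = y" "\<And>t. P (Suc s) t = 0"
    and B0: "\<And>t. t \<in> {0..h} \<Longrightarrow> norm (E 0 t) \<le> Ma"
    and B1: "\<And>t. t \<in> {0..h} \<Longrightarrow> norm (E 1 t) \<le> Mb"
    and Bs: "\<And>t. t \<in> {0..h} \<Longrightarrow> norm (E (Suc s) t) \<le> Ms"
    and d0: "d 0 = 0" and ds: "d s = 1" and d_mono: "\<forall>i<s. d i < d (Suc i)"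
    and interp: "\<And>i. i \<le> s \<Longrightarrow> y (h * d i) = x (h * d i)"
    and EL: "\<And>w t. t \<in> {0..h} \<Longrightarrow>
        ((\<lambda>\<tau>. dLdv L (x \<tau>) (vector_derivative x (at \<tau> within {0..h})) w)
          has_real_derivative
          dLdq L (x t) (vector_derivative x (at t within {0..h})) w) (at t within {0..h})"
    and R: "R = Ma + Mb + 2 * real DIM('a) * Ms"
  shows "\<bar>action L h x - action L h y\<bar> \<le> C * (2 * real DIM('a) * Ms)\<^sup>2 * h ^ (2 * s + 1)"
proof -
  define n where "n = real DIM('a)"
  have Ed: "(E k has_vector_derivative E (Suc k) t) (at t within {0..h})" if "t \<in> {0..h}" for k t
    using Ecd that unfolding curve_derivs_def by blast
  have Ex: "E 0 t = x t" if "t \<in> {0..h}" for t using Ecd that unfolding curve_derivs_def by blast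
  have xd: "(x has_vector_derivative E 1 t) (at t within {0..h})" if "t \<in> {0..h}" for t
    using has_vector_derivative_weaken[OF Ed[OF that, of 0] that order_refl Ex] by simp
  have vx: "vector_derivative x (at t within {0..h}) = E 1 t" if "t \<in> {0..h}" for t
    using vector_derivative_within_closed_interval[OF h(1) that xd[OF that]] .
  have vy: "vector_derivative y (at t within {0..h}) = P 1 t" if "t \<in> {0..h}" for t
    using vector_derivative_within_closed_interval[OF h(1) that
        has_vector_derivative_at_within[OF Pd(1)[of 0 t]]] Pd(2) by simp
  have dI: "d i \<in> {0..1}" if "i \<le> s" for i
  proof -
    have "d 0 \<le> d i" using that
    proof (induction i)
      case (Suc i) then show ?case using d_mono by (metis Suc_le_lessD less_imp_le order_trans)
    qed simp
    moreover have "d i \<le> d s" using that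
    proof (induction "s - i" arbitrary: i)
      case (Suc m)
      then have "d (Suc i) \<le> d s" "i < s" by auto
      then show ?case using d_mono by fastforce
    qed simp
    ultimately show ?thesis using d0 ds by auto
  qed
  have comp: "\<bar>(P k t - E k t) \<bullet> b\<bar> \<le> Ms * h ^ (Suc s - k)"
    if b: "b \<in> Basis" and k: "k \<le> Suc s" and t: "t \<in> {0..h}" for b k t
  proof -
    define F where "F k t = (P k t - E k t) \<bullet> b" for k t
    have Fd: "(F k has_real_derivative F (Suc k) t) (at t within {0..h})" if "t \<in> {0..h}" for k t
      unfolding F_def has_real_derivative_iff_has_vector_derivative
      by (rule bounded_linear.has_vector_derivative[OF bounded_linear_inner_left])
         (intro has_vector_derivative_diff has_vector_derivative_at_within[OF Pd(1)] Ed that)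
    have "\<bar>F (Suc s - (Suc s - k)) t\<bar> \<le> Ms * h ^ (Suc s - k)"
    proof (rule interp_bound[where F=F and h=h and s=s and z="\<lambda>i. h * d i" and M=Ms])
      show "\<forall>i<s. h * d i < h * d (Suc i)" using d_mono h by auto
      show "\<forall>i\<le>s. h * d i \<in> {0..h}" using dI h by (auto simp: mult_le_cancel_left1)
      show "\<forall>i\<le>s. F 0 (h * d i) = 0"
        using interp Ex dI h Pd(2) by (auto simp: F_def mult_le_cancel_left1)
      fix t assume "t \<in> {0..h}"
      then show "\<bar>F (Suc s) t\<bar> \<le> Ms"
        using Bs[of t] Pd(3)[of t] Basis_le_norm[OF b, of "E (Suc s) t"] by (simp add: F_def)
    qed (use t Fd h in auto)
    then show ?thesis using k by (simp add: F_def)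
  qed
  have "norm (E (Suc s) 0) \<le> Ms" using Bs[of 0] h by simp
  then have Ms0: "Ms \<ge> 0" using norm_ge_zero[of "E (Suc s) 0"] by linarith
  define e where "e t = y t - x t" for t
  define e' where "e' t = P 1 t - E 1 t" for t
  have eb: "e t = P 0 t - E 0 t" if "t \<in> {0..h}" for t using Ex[OF that] Pd(2) by (simp add: e_def)
  have hs: "h ^ k \<le> 1" for k using h by (simp add: power_le_one)
  have ebound: "norm (e t) \<le> n * Ms * h ^ Suc s" if t: "t \<in> {0..h}" for t
  proof -
    have "norm (e t) \<le> (\<Sum>b\<in>Basis. \<bar>e t \<bullet> b\<bar>)" by (rule norm_le_l1)
    also have "\<dots> \<le> (\<Sum>b\<in>(Basis::'a set). Ms * h ^ Suc s)"
    proof (rule sum_mono)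
      fix b :: 'a assume b: "b \<in> Basis"
      have "\<bar>(P 0 t - E 0 t) \<bullet> b\<bar> \<le> Ms * h ^ (Suc s - 0)" by (rule comp[OF b _ t]) simp
      then show "\<bar>e t \<bullet> b\<bar> \<le> Ms * h ^ Suc s" unfolding eb[OF t] by simp
    qed
    finally show ?thesis by (simp add: n_def)
  qed
  have e'bound: "norm (e' t) \<le> n * Ms * h ^ s" if t: "t \<in> {0..h}" for t
  proof -
    have "norm (e' t) \<le> (\<Sum>b\<in>Basis. \<bar>e' t \<bullet> b\<bar>)" by (rule norm_le_l1)
    also have "\<dots> \<le> (\<Sum>b\<in>(Basis::'a set). Ms * h ^ s)"
    proof (rule sum_mono)
      fix b :: 'a assume b: "b \<in> Basis"
      have "\<bar>(P 1 t - E 1 t) \<bullet> b\<bar> \<le> Ms * h ^ (Suc s - 1)" by (rule comp[OF b _ t]) simp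
      then show "\<bar>e' t \<bullet> b\<bar> \<le> Ms * h ^ s" unfolding e'_def by simp
    qed
    finally show ?thesis by (simp add: n_def)
  qed
  have n0: "n \<ge> 0" by (simp add: n_def)
  have hSs: "h ^ Suc s \<le> h ^ s" using h by (intro power_decreasing) auto
  have Dbound: "norm (e t, e' t) \<le> 2 * n * Ms * h ^ s" if t: "t \<in> {0..h}" for t
  proof -
    have "norm (e t, e' t) \<le> norm (e t) + norm (e' t)" by (rule norm_Pair_le)
    also have "\<dots> \<le> n * Ms * h ^ Suc s + n * Ms * h ^ s" using ebound[OF t] e'bound[OF t] by simp
    also have "n * Ms * h ^ Suc s \<le> n * Ms * h ^ s"
      using n0 Ms0 hSs by (intro mult_left_mono) auto
    finally show ?thesis by (simp add: mult_ac)
  qed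
  have pbound: "norm (x t, E 1 t) \<le> Ma + Mb" if t: "t \<in> {0..h}" for t
    using norm_Pair_le[of "x t" "E 1 t"] B0[OF t] B1[OF t] Ex[OF t] by simp
  have nMs: "2 * n * Ms * h ^ s \<le> 2 * n * Ms" using hs[of s] Ms0 n0
    by (simp add: mult_left_le)
  have pDbound: "norm ((x t, E 1 t) + (e t, e' t)) \<le> R" if t: "t \<in> {0..h}" for t
  proof -
    have "norm ((x t, E 1 t) + (e t, e' t)) \<le> norm (x t, E 1 t) + norm (e t, e' t)" by (rule norm_triangle_ineq)
    also have "\<dots> \<le> Ma + Mb + 2 * n * Ms * h ^ s" using pbound[OF t] Dbound[OF t] by simp
    also have "\<dots> \<le> R" using nMs by (simp add: R n_def)
    finally show ?thesis .
  qed
  have R0: "Ma + Mb \<le> R" using Ms0 n0 by (simp add: R n_def)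
  define Lf where "Lf p = frechet_derivative L (at p)" for p
  have Lhd: "(L has_derivative Lf p) (at p)" for p
    using Ld[of p] frechet_derivative_works unfolding Lf_def by blast
  have Lbl: "bounded_linear (Lf p)" for p using Lhd has_derivative_bounded_linear by blast
  have Lsplit: "Lf p (a, b) = Lf p (a, 0) + Lf p (0, b)" for p a b
  proof -
    have "Lf p ((a, 0) + (0, b)) = Lf p (a, 0) + Lf p (0, b)"
      using Lbl[of p] bounded_linear.linear linear_add by blast
    then show ?thesis by simp
  qed
  have compv: "(\<Sum>b\<in>Basis. (w \<bullet> b) * Lf p (0, b)) = Lf p (0, w)" for p w
  proof -
    have "bounded_linear (\<lambda>w::'a. Lf p (0, w))"
      using bounded_linear_compose[OF Lbl[of p] bounded_linear_Pair[OF bounded_linear_zero bounded_linear_ident]] by simp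
    from Linear_Algebra.linear_componentwise[OF bounded_linear.linear[OF this], of w 1] show ?thesis by simp
  qed
  \<comment> \<open>first variation as an exact derivative\<close>
  define g where "g b \<tau> = dLdv L (x \<tau>) (vector_derivative x (at \<tau> within {0..h})) b" for b \<tau>
  define G where "G t = (\<Sum>b\<in>Basis. (e t \<bullet> b) * g b t)" for t
  define T where "T t = dLdq L (x t) (E 1 t) (e t) + dLdv L (x t) (E 1 t) (e' t)" for t
  have ed: "(e has_vector_derivative e' t) (at t within {0..h})" if t: "t \<in> {0..h}" for t
    unfolding e_def e'_def using Pd(2) has_vector_derivative_at_within[OF Pd(1)[of 0 t]] xd[OF t]
    by (auto intro!: has_vector_derivative_diff)
  have edb: "((\<lambda>t. e t \<bullet> b) has_real_derivative e' t \<bullet> b) (at t within {0..h})" if t: "t \<in> {0..h}" for t b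
    unfolding has_real_derivative_iff_has_vector_derivative
    by (rule bounded_linear.has_vector_derivative[OF bounded_linear_inner_left ed[OF t]])
  have Gd: "(G has_vector_derivative T t) (at t within {0..h})" if t: "t \<in> {0..h}" for t
  proof -
    have "(G has_real_derivative (\<Sum>b\<in>Basis. (e' t \<bullet> b) * g b t + dLdq L (x t) (vector_derivative x (at t within {0..h})) b * (e t \<bullet> b))) (at t within {0..h})"
      unfolding G_def
      by (intro DERIV_sum DERIV_mult edb[OF t]) (use EL[OF t] in \<open>simp add: g_def\<close>)
    moreover have "(\<Sum>b\<in>Basis. (e' t \<bullet> b) * g b t + dLdq L (x t) (vector_derivative x (at t within {0..h})) b * (e t \<bullet> b)) = T t"
    proof -
      have "(\<Sum>b\<in>Basis. (e' t \<bullet> b) * g b t + dLdq L (x t) (vector_derivative x (at t within {0..h})) b * (e t \<bullet> b))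
          = (\<Sum>b\<in>Basis. (e' t \<bullet> b) * Lf (x t, E 1 t) (0, b)) + (\<Sum>b\<in>Basis. (e t \<bullet> b) * Lf (x t, E 1 t) (b, 0))"
        by (simp add: sum.distrib g_def dLdv_def dLdq_def vx[OF t] Lf_def mult.commute)
      also have "(\<Sum>b\<in>Basis. (e t \<bullet> b) * Lf (x t, E 1 t) (b, 0)) = Lf (x t, E 1 t) (e t, 0)"
      proof -
        have "bounded_linear (\<lambda>w::'a. Lf (x t, E 1 t) (w, 0))"
          using bounded_linear_compose[OF Lbl bounded_linear_Pair[OF bounded_linear_ident bounded_linear_zero]] by simp
        from Linear_Algebra.linear_componentwise[OF bounded_linear.linear[OF this], of "e t" 1] show ?thesis by simp
      qed
      finally show ?thesis using compv[of "e' t" "(x t, E 1 t)"] by (simp add: T_def dLdq_def dLdv_def Lf_def)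
    qed
    ultimately show ?thesis using has_real_derivative_iff_has_vector_derivative by metis
  qed
  have e0: "e 0 = 0" using interp[of 0] d0 by (simp add: e_def)
  have eh: "e h = 0" using interp[of s] ds by (simp add: e_def)
  have Tint: "(T has_integral 0) {0..h}"
    using fundamental_theorem_of_calculus[of 0 h G T] Gd h e0 eh by (simp add: G_def)
  have contL: "continuous_on UNIV L"
    by (rule continuous_at_imp_continuous_on) (use Lhd has_derivative_continuous in blast)
  have contE: "continuous_on {0..h} (E k)" for k
    unfolding continuous_on_eq_continuous_within by (intro ballI has_vector_derivative_continuous[OF Ed])
  have contP: "continuous_on {0..h} (P k)" for k
    unfolding continuous_on_eq_continuous_within
    by (intro ballI has_vector_derivative_continuous[OF has_vector_derivative_at_within[OF Pd(1)]])
  define Lx where "Lx t = L (x t, vector_derivative x (at t within {0..h}))" for t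
  define Ly where "Ly t = L (y t, vector_derivative y (at t within {0..h}))" for t
  have "continuous_on {0..h} (\<lambda>t. L (E 0 t, E 1 t))"
    by (rule continuous_on_compose2[OF contL]) (auto intro!: continuous_on_Pair contE)
  then have cLx: "continuous_on {0..h} Lx"
    by (rule continuous_on_eq) (simp add: Lx_def Ex vx)
  have "continuous_on {0..h} (\<lambda>t. L (P 0 t, P 1 t))"
    by (rule continuous_on_compose2[OF contL]) (auto intro!: continuous_on_Pair contP)
  then have cLy: "continuous_on {0..h} Ly"
    by (rule continuous_on_eq) (simp add: Ly_def vy Pd(2))
  have ix: "(Lx has_integral action L h x) {0..h}"
    unfolding action_def Lx_def[symmetric]
    using integrable_continuous_interval[OF cLx] by (simp add: has_integral_integral)
  have iy: "(Ly has_integral action L h y) {0..h}"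
    unfolding action_def Ly_def[symmetric]
    using integrable_continuous_interval[OF cLy] by (simp add: has_integral_integral)
  have iQ: "((\<lambda>t. Ly t - Lx t - T t) has_integral (action L h y - action L h x - 0)) {0..h}"
    by (intro has_integral_diff iy ix Tint)
  define B where "B = C * (2 * real DIM('a) * Ms)\<^sup>2 * h ^ (2 * s)"
  have Qb: "norm (Ly t - Lx t - T t) \<le> B" if t: "t \<in> {0..h}" for t
  proof -
    let ?p = "(x t, E 1 t)" and ?D = "(e t, e' t)"
    have pD: "?p + ?D = (y t, P 1 t)" by (simp add: e_def e'_def)
    have "Ly t = L (?p + ?D)" unfolding pD by (simp add: Ly_def vy[OF t])
    moreover have "Lx t = L ?p" by (simp add: Lx_def vx[OF t])
    moreover have "T t = frechet_derivative L (at ?p) ?D"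
      using Lsplit[of ?p "e t" "e' t"] by (simp add: T_def dLdq_def dLdv_def Lf_def)
    ultimately have "norm (Ly t - Lx t - T t) \<le> C * (norm ?D)\<^sup>2"
      using taylor[of ?p ?D] pbound[OF t] R0 pDbound[OF t] by simp
    also have "\<dots> \<le> C * (2 * n * Ms * h ^ s)\<^sup>2"
      using Dbound[OF t] C0 by (intro mult_left_mono power_mono) auto
    also have "\<dots> = B" by (simp add: B_def n_def power_mult_distrib power_mult[symmetric] mult_ac)
    finally show ?thesis .
  qed
  have B0: "B \<ge> 0" using C0 h by (simp add: B_def)
  have "\<bar>action L h y - action L h x\<bar> \<le> B * h"
    using has_integral_bound[OF B0, of "\<lambda>t. Ly t - Lx t - T t" _ 0 h] iQ Qb h by simp
  then show ?thesis by (simp add: B_def abs_minus_commute power_add mult_ac)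
qed
theorem mainTheorem3:
  fixes L :: "'a::euclidean_space \<times> 'a \<Rightarrow> real"
    and s :: nat and d :: "nat \<Rightarrow> real"
    and q :: "real \<Rightarrow> 'a" and h0 h1 :: real
    and qEL :: "real \<Rightarrow> real \<Rightarrow> 'a" and qhat :: "real \<Rightarrow> real \<Rightarrow> 'a"
  assumes L_smooth: "smooth_map L"
    and s_pos: "s \<ge> 1"
    and d0: "d 0 = 0" and ds: "d s = 1"
    and d_mono: "\<forall>i<s. d i < d (Suc i)"
    and h0_pos: "0 < h0" and q_smooth: "smooth_curve_on {0..h0} q"
    and h1: "0 < h1" "h1 \<le> h0"
    and EL_smooth: "\<forall>h\<in>{0<..h1}. smooth_curve_on {0..h} (qEL h)"
    and EL_eq: "\<forall>h\<in>{0<..h1}. \<forall>w. \<forall>t\<in>{0..h}.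
        ((\<lambda>\<tau>. dLdv L (qEL h \<tau>) (vector_derivative (qEL h) (at \<tau> within {0..h})) w)
          has_real_derivative
          dLdq L (qEL h t) (vector_derivative (qEL h) (at t within {0..h})) w) (at t within {0..h})"
    and EL_bc: "\<forall>h\<in>{0<..h1}. qEL h 0 = q 0 \<and> qEL h h = q h"
    and EL_uniform: "\<exists>D :: real \<Rightarrow> nat \<Rightarrow> real \<Rightarrow> 'a.
        (\<forall>h\<in>{0<..h1}. curve_derivs {0..h} (qEL h) (D h)) \<and>
        (\<forall>k. \<exists>M. \<forall>h\<in>{0<..h1}. \<forall>t\<in>{0..h}. norm (D h k t) \<le> M)"
    and qhat_poly: "\<forall>h\<in>{0<..h1}. \<exists>c :: nat \<Rightarrow> 'a. \<forall>t. qhat h t = (\<Sum>j\<le>s. t ^ j *\<^sub>R c j)"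
    and qhat_interp: "\<forall>h\<in>{0<..h1}. \<forall>i\<le>s. qhat h (h * d i) = qEL h (h * d i)"
  shows "(\<lambda>h. action L h (qEL h) - action L h (qhat h)) \<in> O[at_right 0](\<lambda>h. h ^ (2 * s + 1))"
proof -
  obtain D :: "real \<Rightarrow> nat \<Rightarrow> real \<Rightarrow> 'a" where Dcd: "\<forall>h\<in>{0<..h1}. curve_derivs {0..h} (qEL h) (D h)"
    and Dbd: "\<forall>k. \<exists>M. \<forall>h\<in>{0<..h1}. \<forall>t\<in>{0..h}. norm (D h k t) \<le> M"
    using EL_uniform by blast
  obtain M0 where M0: "\<forall>h\<in>{0<..h1}. \<forall>t\<in>{0..h}. norm (D h 0 t) \<le> M0" using Dbd by blast
  obtain M1 where M1: "\<forall>h\<in>{0<..h1}. \<forall>t\<in>{0..h}. norm (D h 1 t) \<le> M1" using Dbd by blast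
  obtain Ms where Ms: "\<forall>h\<in>{0<..h1}. \<forall>t\<in>{0..h}. norm (D h (Suc s) t) \<le> Ms" using Dbd by blast
  define R where "R = M0 + M1 + 2 * real DIM('a) * Ms"
  obtain C where C0: "C \<ge> 0" and taylor: "\<And>p \<Delta>. norm p \<le> R \<Longrightarrow> norm (p + \<Delta>) \<le> R \<Longrightarrow>
        \<bar>L (p + \<Delta>) - L p - frechet_derivative L (at p) \<Delta>\<bar> \<le> C * (norm \<Delta>)\<^sup>2"
    using smooth_taylor2[OF L_smooth, of R] by blast
  have Ld: "L differentiable (at p)" for p
  proof -
    obtain DL :: "('a \<times> 'a) list \<Rightarrow> 'a \<times> 'a \<Rightarrow> real" where "DL [] = L"
      "\<And>vs x. (DL vs has_derivative (\<lambda>v. DL (v # vs) x)) (at x)"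
      using L_smooth unfolding smooth_map_def by blast
    then show ?thesis unfolding differentiable_def by metis
  qed
  define c0 where "c0 = C * (2 * real DIM('a) * Ms)\<^sup>2"
  have main: "\<bar>action L h (qEL h) - action L h (qhat h)\<bar> \<le> c0 * h ^ (2 * s + 1)"
    if h: "0 < h" "h < min h1 1" for h
  proof -
    have hI: "h \<in> {0<..h1}" using h by auto
    obtain c :: "nat \<Rightarrow> 'a" where c: "\<forall>t. qhat h t = (\<Sum>j\<le>s. t ^ j *\<^sub>R c j)"
      using qhat_poly hI by blast
    obtain P where P: "P 0 = (\<lambda>t. \<Sum>j\<le>s. t ^ j *\<^sub>R c j)"
      "\<forall>k t. (P k has_vector_derivative P (Suc k) t) (at t)" "\<forall>k>s. \<forall>t. P k t = 0"
      using poly_tower[where n=s and c=c] by blast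
    have P0: "P 0 = qhat h" using P(1) c by auto
    have Dh: "curve_derivs {0..h} (qEL h) (D h)" using Dcd hI by blast
    have ih: "\<forall>i\<le>s. qhat h (h * d i) = qEL h (h * d i)" using qhat_interp hI by blast
    have elh: "\<forall>w. \<forall>t\<in>{0..h}.
        ((\<lambda>\<tau>. dLdv L (qEL h \<tau>) (vector_derivative (qEL h) (at \<tau> within {0..h})) w)
          has_real_derivative
          dLdq L (qEL h t) (vector_derivative (qEL h) (at t within {0..h})) w) (at t within {0..h})"
      using EL_eq hI by blast
    have b0: "\<forall>t\<in>{0..h}. norm (D h 0 t) \<le> M0" using M0 hI by blast
    have b1: "\<forall>t\<in>{0..h}. norm (D h 1 t) \<le> M1" using M1 hI by blast
    have bs: "\<forall>t\<in>{0..h}. norm (D h (Suc s) t) \<le> Ms" using Ms hI by blast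
    show ?thesis unfolding c0_def
    proof (rule per_h[where E="D h" and P=P and d=d and Ma=M0 and Mb=M1 and Ms=Ms and R=R])
      show "\<And>p. L differentiable (at p)" by (rule Ld)
    qed (use taylor C0 h Dh P P0 b0 b1 bs d0 ds d_mono ih elh R_def in auto)
  qed
  show ?thesis
  proof (rule bigoI[where c=c0])
    show "eventually (\<lambda>h. norm (action L h (qEL h) - action L h (qhat h)) \<le> c0 * norm (h ^ (2 * s + 1))) (at_right (0::real))"
      unfolding eventually_at_right_field
    proof (intro exI[of _ "min h1 1"] conjI allI impI)
      show "0 < min h1 1" using h1 by simp
      fix h :: real assume "0 < h" "h < min h1 1"
      then show "norm (action L h (qEL h) - action L h (qhat h)) \<le> c0 * norm (h ^ (2 * s + 1))"
        using main[of h] by simp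
    qed
  qed
qed

end
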